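(* Let $\alpha\ge\tfrac12$ and $1\le p<\infty$. There is a constant $C>0$ depending only on $\alpha$ and $p$ such that for every measurable $f$ on $\mathbb{R}_+$, $\sup_{y\in\mathbb{R}_+}\Big(\int_{\mathbb{R}_+}|f|^p\,\tau_y\mathbf{1}_{[0,1]}\,d\omega_\alpha\Big)^{1/p}\le C\,\|f\|_{p,\infty}.$
   Context: Fix $\alpha\geq\tfrac12$. The Bessel–Kingman hypergroup is $(\mathbb{R}_+,*_\alpha)$ with Haar measure $\omega_\alpha(dz)=z^{2\alpha+1}dz$ and, for $x,y>0$, $\varepsilon_x*_\alpha\varepsilon_y(f)=\int_{|x-y|}^{x+y}K_\alpha(x,y,z)f(z)z^{2\alpha+1}dz$ with $K_\alpha(x,y,z)=C_\Gamma\frac{[(z^2-(x-y)^2)((x+y)^2-z^2)]^{\alpha-1/2}}{(xyz)^{2\alpha}}$, $C_\Gamma=\frac{\Gamma(\alpha+1)}{\Gamma(1/2)\Gamma(\alpha+1/2)2^{2\alpha-1}}$; $\varepsilon_0$ is the identity. The translation is $\tau_yf(x)=\varepsilon_x*_\alpha\varepsilon_y(f)$ (so $\tau_0f=f$). Let $I_n=[n-1,n)$, $\omega_n=\omega_\alpha(I_n)$, and $\|f\|_{p,\infty}=\sup_{n\ge1}\big(\frac1{\omega_n}\int_{I_n}|f|^pd\omega_\alpha\big)^{1/p}$. *)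

theory Defs
  imports "HOL-Analysis.Analysis"
begin

text \<open>Bessel--Kingman hypergroup on R_+ = [0,\<infinity>), alpha \<ge> 1/2.\<close>

definition C_Gamma :: "real \<Rightarrow> real" where
  "C_Gamma \<alpha> = Gamma (\<alpha> + 1) / (Gamma (1/2) * Gamma (\<alpha> + 1/2) * 2 powr (2*\<alpha> - 1))"

definition K_alpha :: "real \<Rightarrow> real \<Rightarrow> real \<Rightarrow> real \<Rightarrow> real" where
  "K_alpha \<alpha> x y z =
     C_Gamma \<alpha> * ((z\<^sup>2 - (x - y)\<^sup>2) * ((x + y)\<^sup>2 - z\<^sup>2)) powr (\<alpha> - 1/2)
       / (x * y * z) powr (2*\<alpha>)"

definition omega :: "real \<Rightarrow> real measure" where
  "omega \<alpha> = density (lebesgue_on {0..}) (\<lambda>z. ennreal (z powr (2*\<alpha> + 1)))"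

text \<open>Generalized translation \<tau>_y f(x) = (\<epsilon>_x * \<epsilon>_y)(f); \<epsilon>_0 is the identity.\<close>
definition tau :: "real \<Rightarrow> real \<Rightarrow> (real \<Rightarrow> real) \<Rightarrow> real \<Rightarrow> real" where
  "tau \<alpha> y f x =
     (if x = 0 then f y
      else if y = 0 then f x
      else (LINT z:{\<bar>x - y\<bar>..x + y}|lborel. K_alpha \<alpha> x y z * f z * z powr (2*\<alpha> + 1)))"

definition enn_root :: "real \<Rightarrow> ennreal \<Rightarrow> ennreal" where
  "enn_root p t = (if t = \<infinity> then \<infinity> else ennreal (enn2real t powr (1/p)))"

definition I_n :: "nat \<Rightarrow> real set" where
  "I_n n = {real n - 1..<real n}"

definition omega_n :: "real \<Rightarrow> nat \<Rightarrow> real" where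
  "omega_n \<alpha> n = measure (omega \<alpha>) (I_n n)"

definition amalgam_norm :: "real \<Rightarrow> real \<Rightarrow> (real \<Rightarrow> real) \<Rightarrow> ennreal" where
  "amalgam_norm \<alpha> p f =
     (SUP n\<in>{1..}. enn_root p
        ((\<integral>\<^sup>+ x\<in>I_n n. ennreal (\<bar>f x\<bar> powr p) \<partial>omega \<alpha>) / ennreal (omega_n \<alpha> n)))"

end

theory Submission
  imports Defs
begin

lemma powr_meas: "(\<lambda>z::real. z powr c) \<in> borel_measurable (lebesgue_on S)"
  apply (rule measurable_restrict_space1)
  apply (rule measurable_completion) by measurable
lemma omega_sets: "sets (omega a) = sets (lebesgue_on {0..})" by (simp add: omega_def)
lemma omega_space: "space (omega a) = {0..}" by (simp add: omega_def)
lemma In_sets: "n \<ge> 1 \<Longrightarrow> I_n n \<in> sets (lebesgue_on {0..})"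
  by (subst sets_restrict_space_iff) (auto simp: I_n_def)
lemma omega_n_le: assumes "n \<ge> 1" "a \<ge> 0" shows "omega_n a n \<le> real n powr (2*a+1)"
proof -
  have n1: "real n \<ge> 1" using assms by simp
  have "emeasure (omega a) (I_n n) = (\<integral>\<^sup>+ z. ennreal (z powr (2*a+1)) * indicator (I_n n) z \<partial>lebesgue_on {0..})"
    unfolding omega_def by (rule emeasure_density) (auto intro: In_sets assms powr_meas)
  also have "\<dots> \<le> (\<integral>\<^sup>+ z. ennreal (real n powr (2*a+1)) * indicator (I_n n) z \<partial>lebesgue_on {0..})"
    apply (rule nn_integral_mono)
    apply (use assms in \<open>auto simp: I_n_def indicator_def intro!: ennreal_leI powr_mono2\<close>)
    done
  also have "\<dots> = ennreal (real n powr (2*a+1)) * emeasure (lebesgue_on {0..}) (I_n n)"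
    by (rule nn_integral_cmult_indicator) (auto intro: In_sets assms)
  also have "emeasure (lebesgue_on {0..}) (I_n n) = emeasure lebesgue (I_n n)"
    by (rule emeasure_restrict_space) (use n1 in \<open>auto simp: I_n_def\<close>)
  also have "\<dots> = 1" by (simp add: I_n_def)
  finally have "emeasure (omega a) (I_n n) \<le> ennreal (real n powr (2*a+1))" by simp
  then show ?thesis unfolding omega_n_def measure_def
    by (simp add: enn2real_leI)
qed

lemma CG_nonneg: "\<alpha> \<ge> 1/2 \<Longrightarrow> C_Gamma \<alpha> \<ge> 0"
  unfolding C_Gamma_def by (intro divide_nonneg_pos mult_pos_pos) auto

lemma kern_eq:
  assumes "x > 0" "y > 0" "z > 0"
  shows "K_alpha \<alpha> x y z * z powr (2*\<alpha>+1) =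
     C_Gamma \<alpha> * ((z\<^sup>2 - (x - y)\<^sup>2) * ((x + y)\<^sup>2 - z\<^sup>2)) powr (\<alpha> - 1/2) * z / (x*y) powr (2*\<alpha>)"
proof -
  have 1: "(x*y*z) powr (2*\<alpha>) = (x*y) powr (2*\<alpha>) * z powr (2*\<alpha>)"
    using assms by (simp add: powr_mult)
  have 2: "z powr (2*\<alpha>+1) = z powr (2*\<alpha>) * z" using assms by (simp add: powr_add)
  have "z powr (2*\<alpha>) > 0" "(x*y) powr (2*\<alpha>) > 0" using assms by auto
  then show ?thesis unfolding K_alpha_def 1 2 by (simp add: field_simps)
qed

lemma P_bound1:
  fixes x y z :: real
  assumes "x > 0" "y > 0"
  shows "(z\<^sup>2 - (x - y)\<^sup>2) * ((x + y)\<^sup>2 - z\<^sup>2) \<le> (2*x*y)\<^sup>2"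
proof -
  have "(2*x*y)\<^sup>2 - (z\<^sup>2 - (x - y)\<^sup>2) * ((x + y)\<^sup>2 - z\<^sup>2) = (z\<^sup>2 - (x\<^sup>2+y\<^sup>2))\<^sup>2"
    by (simp add: power2_eq_square algebra_simps)
  then show ?thesis by (smt (verit) zero_le_power2)
qed

lemma P_nonneg:
  fixes x y z :: real
  assumes "x > 0" "y > 0" "\<bar>x-y\<bar> \<le> z" "z \<le> x + y"
  shows "0 \<le> (z\<^sup>2 - (x - y)\<^sup>2) * ((x + y)\<^sup>2 - z\<^sup>2)"
proof -
  have "(x-y)\<^sup>2 \<le> z\<^sup>2" using assms
    by (metis abs_ge_zero power2_abs power_mono)
  moreover have "z\<^sup>2 \<le> (x+y)\<^sup>2" using assms
    by (meson abs_ge_zero order_trans power_mono)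
  ultimately show ?thesis by simp
qed

lemma kern_pt1:
  assumes a: "\<alpha> \<ge> 1/2" and "x > 0" "y > 0" "\<bar>x-y\<bar> \<le> z" "z \<le> x + y"
  shows "0 \<le> K_alpha \<alpha> x y z * z powr (2*\<alpha>+1)"
    "K_alpha \<alpha> x y z * z powr (2*\<alpha>+1) \<le> C_Gamma \<alpha> * 2 powr (2*\<alpha>-1) * z / (x*y)"
proof -
  show "0 \<le> K_alpha \<alpha> x y z * z powr (2*\<alpha>+1)"
    unfolding K_alpha_def using CG_nonneg[OF a] by simp
  show "K_alpha \<alpha> x y z * z powr (2*\<alpha>+1) \<le> C_Gamma \<alpha> * 2 powr (2*\<alpha>-1) * z / (x*y)"
  proof (cases "z = 0")
    case True then show ?thesis by simp
  next
    case False
    then have z: "z > 0" using assms by linarith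
    let ?P = "(z\<^sup>2 - (x - y)\<^sup>2) * ((x + y)\<^sup>2 - z\<^sup>2)"
    have "?P powr (\<alpha> - 1/2) \<le> ((2*x*y)\<^sup>2) powr (\<alpha> - 1/2)"
      by (rule powr_mono2) (use a P_nonneg[OF assms(2-5)] P_bound1[OF assms(2,3)] in auto)
    also have "\<dots> = (2*x*y) powr (2*\<alpha> - 1)"
    proof -
      have "(2*x*y)\<^sup>2 = (2*x*y) powr 2" using assms by (simp add: powr_numeral)
      then have "((2*x*y)\<^sup>2) powr (\<alpha> - 1/2) = (2*x*y) powr (2*(\<alpha> - 1/2))"
        by (simp add: powr_powr)
      then show ?thesis by (simp add: algebra_simps)
    qed
    also have "\<dots> = 2 powr (2*\<alpha>-1) * (x*y) powr (2*\<alpha>) / (x*y)"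
    proof -
      have "(2*x*y) powr (2*\<alpha> - 1) = 2 powr (2*\<alpha> - 1) * (x*y) powr (2*\<alpha> - 1)"
        using assms by (subst powr_mult[symmetric]) (auto simp: mult.assoc)
      moreover have "(x*y) powr (2*\<alpha> - 1) = (x*y) powr (2*\<alpha>) / (x*y)"
        using assms by (simp add: powr_diff)
      ultimately show ?thesis by simp
    qed
    finally have h: "?P powr (\<alpha> - 1/2) \<le> 2 powr (2*\<alpha>-1) * (x*y) powr (2*\<alpha>) / (x*y)" .
    have "K_alpha \<alpha> x y z * z powr (2*\<alpha>+1) = C_Gamma \<alpha> * ?P powr (\<alpha> - 1/2) * z / (x*y) powr (2*\<alpha>)"
      using kern_eq assms z by blast
    also have "\<dots> \<le> C_Gamma \<alpha> * (2 powr (2*\<alpha>-1) * (x*y) powr (2*\<alpha>) / (x*y)) * z / (x*y) powr (2*\<alpha>)"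
      by (intro divide_right_mono mult_right_mono mult_left_mono h CG_nonneg a) (use z in auto)
    also have "\<dots> = C_Gamma \<alpha> * 2 powr (2*\<alpha>-1) * z / (x*y)"
      using assms by simp
    finally show ?thesis .
  qed
qed


lemma kern_pt2:
  assumes a: "\<alpha> \<ge> 1/2" and x: "x > 0" and y: "y \<ge> 2" and z: "\<bar>x-y\<bar> \<le> z" "z \<le> 1"
  shows "K_alpha \<alpha> x y z * z powr (2*\<alpha>+1) \<le> C_Gamma \<alpha> * 3 powr (2*\<alpha>-1) * 2 powr (2*\<alpha>) / y powr (2*\<alpha>+1)"
proof (cases "z = 0")
  case True then show ?thesis using CG_nonneg[OF a] by simp
next
  case False
  then have z0: "z > 0" using z by linarith
  have y0: "y > 0" using y by simp
  let ?b = "x + y"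
  let ?P = "(z\<^sup>2 - (x - y)\<^sup>2) * ((x + y)\<^sup>2 - z\<^sup>2)"
  have le1: "(x-y)\<^sup>2 \<le> z\<^sup>2" using z by (metis abs_ge_zero power2_abs power_mono)
  have le2: "z\<^sup>2 \<le> (x+y)\<^sup>2" using z x y by (intro power_mono) auto
  have "?P \<le> z\<^sup>2 * ?b\<^sup>2" using le1 le2 by (intro mult_mono) auto
  also have "\<dots> = (z * ?b)\<^sup>2" by (simp add: power_mult_distrib)
  finally have Pb: "?P \<le> (z * ?b)\<^sup>2" .
  have "?P powr (\<alpha> - 1/2) \<le> ((z * ?b)\<^sup>2) powr (\<alpha> - 1/2)"
    by (rule powr_mono2) (use a le1 le2 Pb in auto)
  also have "\<dots> = (z * ?b) powr (2*\<alpha> - 1)"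
  proof -
    have "(z * ?b)\<^sup>2 = (z * ?b) powr 2" using x y z0 by (simp add: powr_numeral)
    then have "((z * ?b)\<^sup>2) powr (\<alpha> - 1/2) = (z * ?b) powr (2*(\<alpha> - 1/2))"
      by (simp add: powr_powr)
    then show ?thesis by (simp add: algebra_simps)
  qed
  also have "\<dots> = z powr (2*\<alpha> - 1) * ?b powr (2*\<alpha> - 1)"
    using x y z0 by (simp add: powr_mult)
  finally have h: "?P powr (\<alpha> - 1/2) \<le> z powr (2*\<alpha> - 1) * ?b powr (2*\<alpha> - 1)" .
  have zz: "z powr (2*\<alpha> - 1) * z = z powr (2*\<alpha>)"
    using z0 by (simp add: powr_diff)
  have zle: "z powr (2*\<alpha>) \<le> 1"
  proof -
    have "z powr (2*\<alpha>) \<le> 1 powr (2*\<alpha>)" by (rule powr_mono2) (use z0 z a in auto)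
    then show ?thesis by simp
  qed
  have xy0: "(x*y) powr (2*\<alpha>) > 0" using x y0 by simp
  have "K_alpha \<alpha> x y z * z powr (2*\<alpha>+1) = C_Gamma \<alpha> * ?P powr (\<alpha> - 1/2) * z / (x*y) powr (2*\<alpha>)"
    using kern_eq x y0 z0 by blast
  also have "\<dots> \<le> C_Gamma \<alpha> * (z powr (2*\<alpha> - 1) * ?b powr (2*\<alpha> - 1)) * z / (x*y) powr (2*\<alpha>)"
    by (intro divide_right_mono mult_right_mono mult_left_mono h CG_nonneg a) (use z0 in auto)
  also have "\<dots> = C_Gamma \<alpha> * z powr (2*\<alpha>) * ?b powr (2*\<alpha> - 1) / (x*y) powr (2*\<alpha>)"
    using zz by (simp add: algebra_simps)
  also have "\<dots> \<le> C_Gamma \<alpha> * 1 * ?b powr (2*\<alpha> - 1) / (x*y) powr (2*\<alpha>)"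
    by (intro divide_right_mono mult_right_mono mult_left_mono zle CG_nonneg a) auto
  also have "\<dots> \<le> C_Gamma \<alpha> * (3*y) powr (2*\<alpha> - 1) / (y\<^sup>2/2) powr (2*\<alpha>)"
  proof -
    have "x \<le> y + 1" using z by linarith
    then have "?b powr (2*\<alpha> - 1) \<le> (3*y) powr (2*\<alpha> - 1)"
      using x y a by (intro powr_mono2) auto
    moreover have "(y\<^sup>2/2) powr (2*\<alpha>) \<le> (x*y) powr (2*\<alpha>)"
    proof (intro powr_mono2)
      have "x \<ge> y - 1" using z by linarith
      then have "x \<ge> y/2" using y by linarith
      then have "x * y \<ge> y/2 * y" using y0 by (intro mult_right_mono) auto
      then show "y\<^sup>2/2 \<le> x*y" by (simp add: power2_eq_square)
    qed (use a y0 in auto)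
    moreover have "(y\<^sup>2/2) powr (2*\<alpha>) > 0" using y0 by simp
    ultimately show ?thesis using CG_nonneg[OF a]
      by (simp add: frac_le mult_left_mono divide_simps mult_mono)
  qed
  also have "\<dots> = C_Gamma \<alpha> * 3 powr (2*\<alpha>-1) * 2 powr (2*\<alpha>) / y powr (2*\<alpha>+1)"
  proof -
    have e1: "(3*y) powr (2*\<alpha> - 1) = 3 powr (2*\<alpha>-1) * y powr (2*\<alpha>-1)" using y0 by (simp add: powr_mult)
    have "(y\<^sup>2) powr (2*\<alpha>) = (y powr 2) powr (2*\<alpha>)" using y0 by (simp add: powr_numeral)
    also have "\<dots> = y powr (2*\<alpha>-1) * y powr (2*\<alpha>+1)" by (simp add: powr_powr powr_add[symmetric])
    finally have e2: "(y\<^sup>2) powr (2*\<alpha>) = y powr (2*\<alpha>-1) * y powr (2*\<alpha>+1)" .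
    have e3: "(y\<^sup>2/2) powr (2*\<alpha>) = (y\<^sup>2) powr (2*\<alpha>) / 2 powr (2*\<alpha>)" using y0 by (simp add: powr_divide)
    have "y powr (2*\<alpha>-1) > 0" "y powr (2*\<alpha>+1) > 0" "(2::real) powr (2*\<alpha>) > 0" using y0 by auto
    then show ?thesis unfolding e1 e3 e2 by (simp add: field_simps)
  qed
  finally show ?thesis .
qed


lemma lint_bound:
  fixes h :: "real \<Rightarrow> real"
  assumes "c \<ge> 0" "l \<le> u" "\<And>z. indicator S z * h z \<le> c * indicator {l..u} z"
  shows "(LINT z:S|lborel. h z) \<le> c * (u - l)"
  unfolding set_lebesgue_integral_def
proof (rule integral_real_bounded)
  show "0 \<le> c * (u - l)" using assms by simp
  have "(\<integral>\<^sup>+ z. ennreal (indicator S z *\<^sub>R h z) \<partial>lborel) \<le> (\<integral>\<^sup>+ z. ennreal c * indicator {l..u} z \<partial>lborel)"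
  proof (rule nn_integral_mono)
    fix z
    have "ennreal (indicator S z *\<^sub>R h z) \<le> ennreal (c * indicator {l..u} z)"
      using assms(3)[of z] by (intro ennreal_leI) simp
    also have "\<dots> = ennreal c * indicator {l..u} z" by (simp add: indicator_def)
    finally show "ennreal (indicator S z *\<^sub>R h z) \<le> ennreal c * indicator {l..u} z" .
  qed
  also have "\<dots> = ennreal c * emeasure lborel {l..u}" by (rule nn_integral_cmult_indicator) auto
  also have "\<dots> = ennreal (c * (u - l))" using assms by (simp add: ennreal_mult)
  finally show "(\<integral>\<^sup>+ z. ennreal (indicator S z *\<^sub>R h z) \<partial>lborel) \<le> ennreal (c * (u - l))" .
qed

abbreviation "ind01 \<equiv> (indicator {0..1} :: real \<Rightarrow> real)"

lemma tau_supp: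
  assumes "x \<ge> 0" "y \<ge> 0" "\<bar>x - y\<bar> > 1"
  shows "tau \<alpha> y ind01 x = 0"
proof -
  have "(LINT z:{\<bar>x - y\<bar>..x + y}|lborel. K_alpha \<alpha> x y z * ind01 z * z powr (2*\<alpha> + 1)) =
        (LINT z:{\<bar>x - y\<bar>..x + y}|lborel. 0)"
    by (rule set_lebesgue_integral_cong) (use assms in auto)
  then show ?thesis unfolding tau_def using assms by auto
qed

lemma tau_bound1:
  assumes a: "\<alpha> \<ge> 1/2" and "x \<ge> 0" "y \<ge> 0"
  shows "tau \<alpha> y ind01 x \<le> max 1 (C_Gamma \<alpha> * 2 powr (2*\<alpha>-1) * 4)"
proof (cases "x = 0 \<or> y = 0")
  case True then show ?thesis unfolding tau_def by (auto simp: indicator_def)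
next
  case False
  then have x: "x > 0" and y: "y > 0" using assms by auto
  let ?c = "C_Gamma \<alpha> * 2 powr (2*\<alpha>-1)"
  have c0: "?c \<ge> 0" using CG_nonneg[OF a] by simp
  have "(LINT z:{\<bar>x - y\<bar>..x + y}|lborel. K_alpha \<alpha> x y z * ind01 z * z powr (2*\<alpha> + 1))
        \<le> (?c * (x+y) / (x*y)) * ((x+y) - \<bar>x-y\<bar>)"
  proof (rule lint_bound)
    show "0 \<le> ?c * (x + y) / (x * y)" using c0 x y by simp
    show "\<bar>x - y\<bar> \<le> x + y" using x y by simp
    fix z
    show "indicator {\<bar>x - y\<bar>..x + y} z * (K_alpha \<alpha> x y z * ind01 z * z powr (2 * \<alpha> + 1))
          \<le> ?c * (x + y) / (x * y) * indicator {\<bar>x - y\<bar>..x + y} z"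
    proof (cases "z \<in> {\<bar>x - y\<bar>..x + y}")
      case True
      then have zz: "\<bar>x-y\<bar> \<le> z" "z \<le> x + y" by auto
      note k = kern_pt1[OF a x y zz]
      have "K_alpha \<alpha> x y z * ind01 z * z powr (2 * \<alpha> + 1) \<le> K_alpha \<alpha> x y z * z powr (2 * \<alpha> + 1)"
        using k(1) by (auto simp: indicator_def)
      also have "\<dots> \<le> ?c * z / (x*y)" using k(2) .
      also have "\<dots> \<le> ?c * (x+y) / (x*y)"
        using zz c0 x y by (intro divide_right_mono mult_left_mono) auto
      finally show ?thesis using True by simp
    qed simp
  qed
  also have "\<dots> \<le> ?c * 4"
  proof -
    have "(x+y) * ((x+y) - \<bar>x-y\<bar>) \<le> 4 * (x*y)"
    proof (cases "x \<le> y")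
      case True
      then have "(x+y) * ((x+y) - \<bar>x-y\<bar>) = 2*x*(x+y)" by (simp add: algebra_simps)
      also have "\<dots> \<le> 2*x*(2*y)" using True x by (intro mult_left_mono) auto
      finally show ?thesis by simp
    next
      case False
      then have "(x+y) * ((x+y) - \<bar>x-y\<bar>) = 2*y*(x+y)" by (simp add: algebra_simps)
      also have "\<dots> \<le> 2*y*(2*x)" using False y by (intro mult_left_mono) auto
      finally show ?thesis by (simp add: mult.commute[of y x])
    qed
    then have "(x+y) * ((x+y) - \<bar>x-y\<bar>) / (x*y) \<le> 4"
      by (subst pos_divide_le_eq[OF mult_pos_pos[OF x y]]) linarith
    then have "?c * ((x+y) * ((x+y) - \<bar>x-y\<bar>) / (x*y)) \<le> ?c * 4" using c0 by (rule mult_left_mono)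
    then show ?thesis by (simp add: algebra_simps)
  qed
  finally show ?thesis unfolding tau_def using x y by simp
qed

lemma tau_bound2:
  assumes a: "\<alpha> \<ge> 1/2" and "x \<ge> 0" "y \<ge> 2"
  shows "tau \<alpha> y ind01 x \<le> C_Gamma \<alpha> * 3 powr (2*\<alpha>-1) * 2 powr (2*\<alpha>) / y powr (2*\<alpha>+1)"
proof (cases "x = 0")
  case True then show ?thesis unfolding tau_def using assms CG_nonneg[OF a] by (auto simp: indicator_def)
next
  case False
  then have x: "x > 0" and y: "y > 0" using assms by auto
  let ?D = "C_Gamma \<alpha> * 3 powr (2*\<alpha>-1) * 2 powr (2*\<alpha>) / y powr (2*\<alpha>+1)"
  have D0: "?D \<ge> 0" using CG_nonneg[OF a] by simp
  have "(LINT z:{\<bar>x - y\<bar>..x + y}|lborel. K_alpha \<alpha> x y z * ind01 z * z powr (2*\<alpha> + 1))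
        \<le> ?D * (1 - 0)"
  proof (rule lint_bound)
    fix z
    show "indicator {\<bar>x - y\<bar>..x + y} z * (K_alpha \<alpha> x y z * ind01 z * z powr (2 * \<alpha> + 1))
          \<le> ?D * indicator {0..1} z"
    proof (cases "z \<in> {\<bar>x - y\<bar>..x + y} \<and> z \<in> {0..1}")
      case True
      then have zz: "\<bar>x-y\<bar> \<le> z" "z \<le> 1" by auto
      show ?thesis using kern_pt2[OF a x assms(3) zz] True by simp
    qed (use D0 in \<open>auto simp: indicator_def\<close>)
  qed (use D0 in auto)
  then show ?thesis unfolding tau_def using x y by simp
qed


definition "Bc \<alpha> = max 1 (C_Gamma \<alpha> * 2 powr (2*\<alpha>-1) * 4)"
definition "Dc \<alpha> = C_Gamma \<alpha> * 3 powr (2*\<alpha>-1) * 2 powr (2*\<alpha>)"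
definition "Mf \<alpha> y = (if y \<le> 2 then Bc \<alpha> else Dc \<alpha> / y powr (2*\<alpha>+1))"
definition "Nset (y::real) = {max 1 (nat \<lfloor>y\<rfloor>) .. nat \<lfloor>y\<rfloor> + 2}"
definition "K0 \<alpha> = max (Bc \<alpha> * 4 powr (2*\<alpha>+1)) (Dc \<alpha> * 2 powr (2*\<alpha>+1))"

lemma Mf_nonneg: "\<alpha> \<ge> 1/2 \<Longrightarrow> Mf \<alpha> y \<ge> 0"
  unfolding Mf_def Bc_def Dc_def using CG_nonneg[of \<alpha>] by auto

lemma tau_M:
  assumes a: "\<alpha> \<ge> 1/2" and x: "x \<ge> 0" and y: "y \<ge> 0"
  shows "tau \<alpha> y ind01 x \<le> Mf \<alpha> y * (\<Sum>n\<in>Nset y. indicator (I_n n) x)"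
proof (cases "\<bar>x - y\<bar> > 1")
  case True
  then show ?thesis using tau_supp[OF x y True] Mf_nonneg[OF a]
    by (simp add: sum_nonneg)
next
  case False
  define n0 where "n0 = nat \<lfloor>x\<rfloor> + 1"
  have fx: "of_int \<lfloor>x\<rfloor> \<le> x" "x < of_int \<lfloor>x\<rfloor> + 1" by linarith+
  have fy: "of_int \<lfloor>y\<rfloor> \<le> y" "y < of_int \<lfloor>y\<rfloor> + 1" by linarith+
  have "\<lfloor>x\<rfloor> \<ge> 0" "\<lfloor>y\<rfloor> \<ge> 0" using x y by auto
  moreover have "\<lfloor>y\<rfloor> \<le> \<lfloor>x\<rfloor> + 1" using floor_mono[of y "x+1"] False by auto
  moreover have "\<lfloor>x\<rfloor> \<le> \<lfloor>y\<rfloor> + 1" using floor_mono[of x "y+1"] False by auto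
  ultimately have n0N: "n0 \<in> Nset y" unfolding n0_def Nset_def by auto
  have n0I: "x \<in> I_n n0" unfolding n0_def I_n_def using fx \<open>\<lfloor>x\<rfloor> \<ge> 0\<close> by (auto; linarith)
  have "1 \<le> (\<Sum>n\<in>Nset y. indicator (I_n n) x :: real)"
  proof -
    have "(indicator (I_n n0) x :: real) \<le> (\<Sum>n\<in>Nset y. indicator (I_n n) x)"
      by (rule member_le_sum) (use n0N in \<open>auto simp: Nset_def\<close>)
    then show ?thesis using n0I by simp
  qed
  moreover have "tau \<alpha> y ind01 x \<le> Mf \<alpha> y"
    unfolding Mf_def Bc_def Dc_def using tau_bound1[OF a x y] tau_bound2[OF a x, of y] by auto
  ultimately show ?thesis using Mf_nonneg[OF a]
    by (smt (verit) mult_left_mono mult_cancel_left1)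
qed

lemma M_omega:
  assumes a: "\<alpha> \<ge> 1/2" and y: "y \<ge> 0" and n: "n \<in> Nset y"
  shows "Mf \<alpha> y * omega_n \<alpha> n \<le> K0 \<alpha>"
proof -
  have n1: "n \<ge> 1" and ny: "real n \<le> y + 2" using n y unfolding Nset_def by (auto, linarith)
  have om0: "omega_n \<alpha> n \<ge> 0" unfolding omega_n_def by simp
  have "omega_n \<alpha> n \<le> real n powr (2*\<alpha>+1)" by (rule omega_n_le) (use n1 a in auto)
  also have "\<dots> \<le> (y+2) powr (2*\<alpha>+1)" using n1 ny a by (intro powr_mono2) auto
  finally have om: "omega_n \<alpha> n \<le> (y+2) powr (2*\<alpha>+1)" .
  have B0: "Bc \<alpha> \<ge> 0" and D0: "Dc \<alpha> \<ge> 0" unfolding Bc_def Dc_def using CG_nonneg[OF a] by auto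
  show ?thesis
  proof (cases "y \<le> 2")
    case True
    have "(y+2) powr (2*\<alpha>+1) \<le> 4 powr (2*\<alpha>+1)" using True y a by (intro powr_mono2) auto
    then have "Bc \<alpha> * omega_n \<alpha> n \<le> Bc \<alpha> * 4 powr (2*\<alpha>+1)"
      using om B0 by (intro mult_left_mono) auto
    then show ?thesis unfolding Mf_def K0_def using True by simp
  next
    case False
    have "(y+2) powr (2*\<alpha>+1) \<le> (2*y) powr (2*\<alpha>+1)" using False a by (intro powr_mono2) auto
    also have "\<dots> = 2 powr (2*\<alpha>+1) * y powr (2*\<alpha>+1)" using False by (simp add: powr_mult)
    finally have om2: "omega_n \<alpha> n \<le> 2 powr (2*\<alpha>+1) * y powr (2*\<alpha>+1)" using om by simp
    have yp: "y powr (2*\<alpha>+1) > 0" using False by simp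
    have "Dc \<alpha> / y powr (2*\<alpha>+1) * omega_n \<alpha> n \<le> Dc \<alpha> / y powr (2*\<alpha>+1) * (2 powr (2*\<alpha>+1) * y powr (2*\<alpha>+1))"
      using om2 D0 yp by (intro mult_left_mono) auto
    also have "\<dots> = Dc \<alpha> * 2 powr (2*\<alpha>+1)" using yp by simp
    finally show ?thesis unfolding Mf_def K0_def using False by simp
  qed
qed

lemma card_Nset: "card (Nset y) \<le> 3" unfolding Nset_def by auto



lemma ennreal_of_bool': "ennreal (of_bool b) = of_bool b" by (cases b) auto

lemma root_le:
  assumes p: "p \<ge> 1" and "L \<le> ennreal R" "R \<ge> 0"
  shows "enn_root p L \<le> ennreal (R powr (1/p))"
proof -
  have "L < top" using assms(2) by (rule order.strict_trans1) simp
  then have "L \<noteq> \<infinity>" by simp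
  moreover have "enn2real L \<le> R" using assms by (intro enn2real_leI) auto
  ultimately show ?thesis unfolding enn_root_def using p
    by (auto intro!: ennreal_leI powr_mono2)
qed

lemma J_bound:
  assumes p: "p \<ge> 1" and A: "amalgam_norm \<alpha> p f = ennreal a" "a \<ge> 0" and n: "n \<ge> 1"
  shows "(\<integral>\<^sup>+ x\<in>I_n n. ennreal (\<bar>f x\<bar> powr p) \<partial>omega \<alpha>) \<le> ennreal (omega_n \<alpha> n * a powr p)"
proof -
  define J where "J = (\<integral>\<^sup>+ x\<in>I_n n. ennreal (\<bar>f x\<bar> powr p) \<partial>omega \<alpha>)"
  define r where "r = J / ennreal (omega_n \<alpha> n)"
  have "enn_root p r \<le> amalgam_norm \<alpha> p f"
    unfolding amalgam_norm_def r_def J_def by (rule SUP_upper) (use n in auto)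
  then have ra: "enn_root p r \<le> ennreal a" using A by simp
  then have rtop: "r \<noteq> \<infinity>" unfolding enn_root_def by (auto simp: top_unique)
  define t where "t = enn2real r"
  have t0: "t \<ge> 0" and rt: "r = ennreal t" using rtop unfolding t_def by (auto simp: less_top)
  have "t powr (1/p) \<le> a" using ra rtop A(2) unfolding enn_root_def t_def by simp
  then have "(t powr (1/p)) powr p \<le> a powr p" using p by (intro powr_mono2) auto
  then have ta: "t \<le> a powr p" using p t0 by (simp add: powr_powr)
  have om0: "omega_n \<alpha> n \<ge> 0" unfolding omega_n_def by simp
  show ?thesis
  proof (cases "omega_n \<alpha> n = 0")
    case True
    then have "J = 0" using rtop unfolding r_def by (auto split: if_splits)
    then show ?thesis unfolding J_def by simp
  next
    case False
    then have "J = r * ennreal (omega_n \<alpha> n)" unfolding r_def using om0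
      by (simp add: ennreal_divide_times)
    also have "\<dots> \<le> ennreal (a powr p) * ennreal (omega_n \<alpha> n)"
      using rt ta by (intro mult_right_mono) auto
    also have "\<dots> = ennreal (omega_n \<alpha> n * a powr p)" using om0 by (simp add: ennreal_mult' mult.commute)
    finally show ?thesis unfolding J_def .
  qed
qed

lemma powr_le_max: "t \<ge> 0 \<Longrightarrow> p \<ge> 1 \<Longrightarrow> t powr (1/p) \<le> max 1 (t::real)"
proof (cases "t \<le> 1")
  case True
  assume "t \<ge> 0" "p \<ge> 1"
  then have "t powr (1/p) \<le> 1 powr (1/p)" using True by (intro powr_mono2) auto
  then show ?thesis by simp
next
  case False
  assume "t \<ge> 0" "p \<ge> 1"
  then have "t powr (1/p) \<le> t powr 1" using False by (intro powr_mono) auto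
  then show ?thesis using False by simp
qed

theorem mainTheorem3:
  fixes \<alpha> p :: real
  assumes "\<alpha> \<ge> 1/2" and "1 \<le> p"
  shows "\<exists>C>0. \<forall>f :: real \<Rightarrow> real. f \<in> borel_measurable (lebesgue_on {0..}) \<longrightarrow>
           (SUP y\<in>{0..}. enn_root p
              (\<integral>\<^sup>+ x. ennreal (\<bar>f x\<bar> powr p * tau \<alpha> y (indicator {0..1}) x) \<partial>omega \<alpha>))
           \<le> ennreal C * amalgam_norm \<alpha> p f"
proof -
  note a = assms(1) and p = assms(2)
  define C where "C = max 1 (3 * K0 \<alpha>)"
  have K00: "K0 \<alpha> \<ge> 0" unfolding K0_def Bc_def by (intro max.coboundedI1 mult_nonneg_nonneg) auto
  have C0: "C > 0" unfolding C_def by simp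
  have "\<forall>f :: real \<Rightarrow> real. f \<in> borel_measurable (lebesgue_on {0..}) \<longrightarrow>
           (SUP y\<in>{0..}. enn_root p
              (\<integral>\<^sup>+ x. ennreal (\<bar>f x\<bar> powr p * tau \<alpha> y (indicator {0..1}) x) \<partial>omega \<alpha>))
           \<le> ennreal C * amalgam_norm \<alpha> p f"
  proof (intro allI impI)
    fix f :: "real \<Rightarrow> real"
    assume fm: "f \<in> borel_measurable (lebesgue_on {0..})"
    show "(SUP y\<in>{0..}. enn_root p
              (\<integral>\<^sup>+ x. ennreal (\<bar>f x\<bar> powr p * tau \<alpha> y (indicator {0..1}) x) \<partial>omega \<alpha>))
           \<le> ennreal C * amalgam_norm \<alpha> p f"
    proof (cases "amalgam_norm \<alpha> p f = \<infinity>")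
      case True
      then show ?thesis using C0 by (simp add: ennreal_mult_top)
    next
      case False
      define a where "a = enn2real (amalgam_norm \<alpha> p f)"
      have a0: "a \<ge> 0" and A: "amalgam_norm \<alpha> p f = ennreal a"
        using False unfolding a_def by (auto simp: less_top)
      have gm: "(\<lambda>x. ennreal (\<bar>f x\<bar> powr p) * indicator (I_n n) x) \<in> borel_measurable (omega \<alpha>)"
        if "n \<ge> 1" for n
      proof -
        have [measurable]: "I_n n \<in> sets (lebesgue_on {0..})" using In_sets that .
        have [measurable]: "f \<in> borel_measurable (lebesgue_on {0..})" using fm .
        have "(\<lambda>x. ennreal (\<bar>f x\<bar> powr p) * indicator (I_n n) x) \<in> borel_measurable (lebesgue_on {0..})"
          by measurable
        then show ?thesis by (simp add: measurable_cong_sets[OF omega_sets refl])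
      qed
      show ?thesis
      proof (rule SUP_least)
        fix y :: real assume "y \<in> {0..}"
        then have y: "y \<ge> 0" by simp
        let ?g = "\<lambda>x. ennreal (\<bar>f x\<bar> powr p)"
        have "(\<integral>\<^sup>+ x. ennreal (\<bar>f x\<bar> powr p * tau \<alpha> y (indicator {0..1}) x) \<partial>omega \<alpha>)
            \<le> (\<integral>\<^sup>+ x. ennreal (Mf \<alpha> y) * (\<Sum>n\<in>Nset y. ?g x * indicator (I_n n) x) \<partial>omega \<alpha>)"
        proof (rule nn_integral_mono)
          fix x assume "x \<in> space (omega \<alpha>)"
          then have x: "x \<ge> 0" by (simp add: omega_space)
          have "ennreal (\<bar>f x\<bar> powr p * tau \<alpha> y (indicator {0..1}) x)
              \<le> ennreal (\<bar>f x\<bar> powr p * (Mf \<alpha> y * (\<Sum>n\<in>Nset y. indicator (I_n n) x)))"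
            by (intro ennreal_leI mult_left_mono tau_M a x y) simp
          also have "\<bar>f x\<bar> powr p * (Mf \<alpha> y * (\<Sum>n\<in>Nset y. indicator (I_n n) x))
               = Mf \<alpha> y * (\<Sum>n\<in>Nset y. \<bar>f x\<bar> powr p * indicator (I_n n) x)"
            by (simp add: sum_distrib_left algebra_simps)
          also have "ennreal \<dots> = ennreal (Mf \<alpha> y) * (\<Sum>n\<in>Nset y. ?g x * indicator (I_n n) x)"
            using Mf_nonneg[OF a]
            by (simp add: ennreal_mult sum_nonneg sum_ennreal[symmetric] ennreal_mult' indicator_def ennreal_of_bool'
                   del: sum_ennreal cong: sum.cong)
          finally show "ennreal (\<bar>f x\<bar> powr p * tau \<alpha> y (indicator {0..1}) x)
              \<le> ennreal (Mf \<alpha> y) * (\<Sum>n\<in>Nset y. ?g x * indicator (I_n n) x)" .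
        qed
        also have "\<dots> = ennreal (Mf \<alpha> y) * (\<Sum>n\<in>Nset y. \<integral>\<^sup>+ x. ?g x * indicator (I_n n) x \<partial>omega \<alpha>)"
        proof -
          have gm': "\<And>n. n \<in> Nset y \<Longrightarrow> (\<lambda>x. ?g x * indicator (I_n n) x) \<in> borel_measurable (omega \<alpha>)"
            using gm by (auto simp: Nset_def)
          have sm: "(\<lambda>x. \<Sum>n\<in>Nset y. ?g x * indicator (I_n n) x) \<in> borel_measurable (omega \<alpha>)"
            by (rule borel_measurable_sum) (rule gm')
          show ?thesis
            by (simp only: nn_integral_cmult[OF sm] nn_integral_sum[OF gm'])
        qed
        also have "\<dots> \<le> ennreal (Mf \<alpha> y) * (\<Sum>n\<in>Nset y. ennreal (omega_n \<alpha> n * a powr p))"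
          by (intro mult_left_mono sum_mono J_bound[OF p A a0]) (auto simp: Nset_def)
        also have "\<dots> = ennreal (\<Sum>n\<in>Nset y. Mf \<alpha> y * omega_n \<alpha> n * a powr p)"
        proof -
          have nn: "\<And>n. 0 \<le> omega_n \<alpha> n * a powr p" unfolding omega_n_def by simp
          have "(\<Sum>n\<in>Nset y. ennreal (omega_n \<alpha> n * a powr p)) = ennreal (\<Sum>n\<in>Nset y. omega_n \<alpha> n * a powr p)"
            using nn by (rule sum_ennreal)
          moreover have "ennreal (Mf \<alpha> y) * ennreal (\<Sum>n\<in>Nset y. omega_n \<alpha> n * a powr p)
               = ennreal (Mf \<alpha> y * (\<Sum>n\<in>Nset y. omega_n \<alpha> n * a powr p))"
            by (rule ennreal_mult[symmetric]) (use Mf_nonneg[OF a] nn in \<open>auto intro: sum_nonneg\<close>)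
          ultimately show ?thesis by (simp add: sum_distrib_left mult.assoc)
        qed
        also have "\<dots> \<le> ennreal (\<Sum>n\<in>Nset y. K0 \<alpha> * a powr p)"
          by (intro ennreal_leI sum_mono mult_right_mono M_omega a y) auto
        also have "\<dots> \<le> ennreal (3 * K0 \<alpha> * a powr p)"
        proof (intro ennreal_leI)
          have "real (card (Nset y)) \<le> 3" using card_Nset[of y] by simp
          moreover have "K0 \<alpha> * a powr p \<ge> 0" using K00 by simp
          ultimately have "real (card (Nset y)) * (K0 \<alpha> * a powr p) \<le> 3 * (K0 \<alpha> * a powr p)"
            by (rule mult_right_mono)
          then show "(\<Sum>n\<in>Nset y. K0 \<alpha> * a powr p) \<le> 3 * K0 \<alpha> * a powr p" by (simp add: mult.assoc)
        qed
        finally have L: "(\<integral>\<^sup>+ x. ennreal (\<bar>f x\<bar> powr p * tau \<alpha> y (indicator {0..1}) x) \<partial>omega \<alpha>)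
            \<le> ennreal (3 * K0 \<alpha> * a powr p)" .
        have R1: "enn_root p (\<integral>\<^sup>+ x. ennreal (\<bar>f x\<bar> powr p * tau \<alpha> y (indicator {0..1}) x) \<partial>omega \<alpha>)
              \<le> ennreal ((3 * K0 \<alpha> * a powr p) powr (1/p))"
          by (rule root_le[OF p L]) (use K00 in simp)
        have "(3 * K0 \<alpha> * a powr p) powr (1/p) = (3 * K0 \<alpha>) powr (1/p) * a"
          using K00 a0 p by (simp add: powr_mult powr_powr)
        also have "\<dots> \<le> C * a"
          unfolding C_def using powr_le_max[of "3 * K0 \<alpha>" p] K00 p a0 by (intro mult_right_mono) auto
        finally have R2: "ennreal ((3 * K0 \<alpha> * a powr p) powr (1/p)) \<le> ennreal C * ennreal a"
          using C0 a0 by (simp add: ennreal_mult[symmetric])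
        show "enn_root p (\<integral>\<^sup>+ x. ennreal (\<bar>f x\<bar> powr p * tau \<alpha> y (indicator {0..1}) x) \<partial>omega \<alpha>)
              \<le> ennreal C * amalgam_norm \<alpha> p f"
          unfolding A using R1 R2 by (rule order.trans)
      qed
    qed
  qed
  then show ?thesis using C0 by blast
qed

end
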